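(* Let $G$ be a topological group and $U$ a nonempty open subset of $G$. Then the open cover $\mathcal{U}=\{g\cdot U\}_{g\in G}$ of $G$ admits a $\mathcal{U}$-small partition of unity.
   Context: A partition of unity on $X$ indexed by a nonempty set $S$ is a family $\{f_s\}_{s\in S}$ of functions $f_s:X\to[0,1]$ with $\sum_{s\in S}f_s(x)=1$ for all $x$, such that the induced map $f:X\to l_1(S)$, $f(x)(s)=f_s(x)$, is continuous (where $l_1(S)$ carries the norm $\|g\|=\sum_{s}|g(s)|$). It is $\mathcal{U}$-small if for each $s\in S$ the carrier $f_s^{-1}((0,1])$ is contained in some element of $\mathcal{U}$. *)

theory Defs
  imports "HOL-Analysis.Analysis"
begin

text \<open>A partition of unity on the whole space (type 'a) indexed by a nonempty set S:
  functions f s : 'a -> [0,1], summing to 1 pointwise, such that the induced map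
  into l1(S) is continuous, i.e. for every x and e > 0, for all y near x the
  l1-distance sum over s in S of |f s y - f s x| is < e.\<close>
definition partition_of_unity :: "'s set \<Rightarrow> ('s \<Rightarrow> 'a::topological_space \<Rightarrow> real) \<Rightarrow> bool" where
  "partition_of_unity S f \<longleftrightarrow>
     S \<noteq> {} \<and>
     (\<forall>s\<in>S. \<forall>x. 0 \<le> f s x \<and> f s x \<le> 1) \<and>
     (\<forall>x. ((\<lambda>s. f s x) has_sum 1) S) \<and>
     (\<forall>x. \<forall>e>0. \<forall>\<^sub>F y in nhds x. infsum (\<lambda>s. \<bar>f s y - f s x\<bar>) S < e)"

definition small_wrt :: "'a set set \<Rightarrow> 's set \<Rightarrow> ('s \<Rightarrow> 'a \<Rightarrow> real) \<Rightarrow> bool" where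
  "small_wrt \<U> S f \<longleftrightarrow> (\<forall>s\<in>S. \<exists>V\<in>\<U>. {x. 0 < f s x \<and> f s x \<le> 1} \<subseteq> V)"

end

theory Submission
  imports Defs
begin


lemma sum_le_one_disj:
  fixes g :: "'s \<Rightarrow> real"
  assumes "finite F" "\<And>s. 0 \<le> g s" "\<And>s. g s \<le> 1"
    "\<And>s t. s \<noteq> t \<Longrightarrow> 0 < g s \<Longrightarrow> g t = 0"
  shows "sum g F \<le> 1"
proof (cases "\<exists>s\<in>F. 0 < g s")
  case True
  then obtain s where s: "s \<in> F" "0 < g s" by blast
  have "sum g F = g s + sum g (F - {s})" using assms(1) s(1) by (simp add: sum.remove)
  also have "sum g (F - {s}) = 0" using assms(4)[OF _ s(2)] by (intro sum.neutral) (metis DiffE singleton_iff)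
  finally show ?thesis using assms(3)[of s] by simp
next
  case False
  then have "sum g F = 0" using assms(2) by (intro sum.neutral) (metis less_eq_real_def)
  then show ?thesis by simp
qed

lemma sum_abs_diff_disj:
  fixes a b :: "'s \<Rightarrow> real"
  assumes "finite F" "\<And>s. 0 \<le> a s" "\<And>s. 0 \<le> b s" "\<And>s. \<bar>a s - b s\<bar> \<le> \<delta>"
    "\<And>s t. s \<noteq> t \<Longrightarrow> 0 < a s \<Longrightarrow> a t = 0"
    "\<And>s t. s \<noteq> t \<Longrightarrow> 0 < b s \<Longrightarrow> b t = 0"
  shows "(\<Sum>s\<in>F. \<bar>a s - b s\<bar>) \<le> 2 * \<delta>"
proof -
  define A where "A = {s\<in>F. 0 < a s}"
  define B where "B = {s\<in>F. 0 < b s}"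
  have cA: "card A \<le> Suc 0" unfolding A_def using assms(1,5)
    by (subst card_le_Suc0_iff_eq) (auto, metis less_irrefl)
  have cB: "card B \<le> Suc 0" unfolding B_def using assms(1,6)
    by (subst card_le_Suc0_iff_eq) (auto, metis less_irrefl)
  have fin: "finite (A \<union> B)" using assms(1) by (auto simp: A_def B_def)
  have "card (A \<union> B) \<le> 2" using card_Un_le[of A B] cA cB by linarith
  have "(\<Sum>s\<in>F. \<bar>a s - b s\<bar>) = (\<Sum>s\<in>A \<union> B. \<bar>a s - b s\<bar>)"
  proof (rule sum.mono_neutral_right[OF assms(1)])
    show "A \<union> B \<subseteq> F" by (auto simp: A_def B_def)
    show "\<forall>i\<in>F - (A \<union> B). \<bar>a i - b i\<bar> = 0"
      using assms(2,3) by (auto simp: A_def B_def) (metis less_eq_real_def)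
  qed
  also have "\<dots> \<le> (\<Sum>s\<in>A \<union> B. \<delta>)" by (rule sum_mono) (use assms(4) in auto)
  also have "\<dots> = card (A \<union> B) * \<delta>" by simp
  also have "\<dots> \<le> 2 * \<delta>"
  proof -
    have "0 \<le> \<delta>" using assms(4)[of undefined] by linarith
    then show ?thesis using \<open>card (A \<union> B) \<le> 2\<close>
      by (intro mult_right_mono) auto
  qed
  finally show ?thesis .
qed

lemma pou_pseudometric:
  fixes d :: "'a \<Rightarrow> 'a \<Rightarrow> real"
  assumes d0: "\<And>x. d x x = 0"
    and dsym: "\<And>x y. d x y = d y x"
    and dtri: "\<And>x y z. d x z \<le> d x y + d y z"
  obtains f :: "'a \<Rightarrow> 'a \<Rightarrow> real" where
    "\<And>s x. 0 \<le> f s x" "\<And>s x. f s x \<le> 1"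
    "\<And>x. ((\<lambda>s. f s x) has_sum 1) UNIV"
    "\<And>s x. 0 < f s x \<Longrightarrow> d s x < 1"
    "\<And>x e. 0 < e \<Longrightarrow> \<exists>\<delta>>0. \<forall>y. d x y < \<delta> \<longrightarrow> infsum (\<lambda>s. \<bar>f s y - f s x\<bar>) UNIV < e"
proof -
  have dnn: "0 \<le> d x y" for x y
  proof -
    have "d x x \<le> d x y + d y x" by (rule dtri)
    then show ?thesis using d0[of x] dsym[of x y] by linarith
  qed
  obtain r :: "'a rel" where r: "Well_order r" "Field r = UNIV" using well_ordering[where 'a='a] by (elim exE conjE)
  define lt where "lt s t \<longleftrightarrow> (s,t) \<in> r - Id" for s t
  have wf: "wf (r - Id)" using r(1) by (simp add: well_order_on_def)
  have tot: "lt s t \<or> lt t s" if "s \<noteq> t" for s t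
    proof -
    have "total_on UNIV r" using r by (simp add: well_order_on_def linear_order_on_def)
    then show ?thesis using that unfolding lt_def total_on_def by blast
  qed
  have minex: "\<exists>z\<in>Q. \<forall>y. lt y z \<longrightarrow> y \<notin> Q" if "x \<in> Q" for Q x
    using wf_eq_minimal[THEN iffD1, OF wf, rule_format, OF that] unfolding lt_def by blast
  define rr where "rr n = (1/2::real)^n / 4" for n
  have rr_pos: "0 < rr n" for n by (simp add: rr_def)
  have rr_le: "rr n \<le> 1" for n
  proof -
    have "(1/2::real)^n \<le> 1" by (simp add: power_le_one)
    then show ?thesis by (simp add: rr_def)
  qed
  define C where "C s n = {c. d s c + 3 * rr n \<le> 1 \<and> (\<forall>t. lt t s \<longrightarrow> \<not> d t c < 1)}" for s n
  define D where "D s n x = Inf ((\<lambda>c. d c x) ` C s n)" for s n x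
  define k where "k s n x = (if C s n = {} then 0 else max 0 (rr n - D s n x))" for s n x
  have bdd: "bdd_below ((\<lambda>c. d c x) ` A)" for x A by (rule bdd_belowI[of _ 0]) (auto simp: dnn)
  have Dlow: "D s n x \<le> d c x" if "c \<in> C s n" for s n x c
    unfolding D_def using that bdd by (intro cInf_lower) auto
  have Dnn: "0 \<le> D s n x" if "C s n \<noteq> {}" for s n x
    unfolding D_def using that by (intro cInf_greatest) (auto simp: dnn)
  have Dlip: "D s n y \<le> D s n x + d x y" if "C s n \<noteq> {}" for s n x y
  proof -
    have "D s n y - d x y \<le> D s n x"
      unfolding D_def
    proof (rule cInf_greatest)
      show "(\<lambda>c. d c x) ` C s n \<noteq> {}" using that by auto
      fix v assume "v \<in> (\<lambda>c. d c x) ` C s n"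
      then obtain c where c: "c \<in> C s n" "v = d c x" by auto
      have "Inf ((\<lambda>c. d c y) ` C s n) \<le> d c y" using c(1) bdd by (intro cInf_lower) auto
      also have "\<dots> \<le> d c x + d x y" by (rule dtri)
      finally show "Inf ((\<lambda>c. d c y) ` C s n) - d x y \<le> v" using c by simp
    qed
    then show ?thesis by simp
  qed
  have Dless: "\<exists>c\<in>C s n. d c x < a" if "C s n \<noteq> {}" "D s n x < a" for s n x a
    using that bdd unfolding D_def by (subst (asm) cInf_less_iff) auto
  have K0: "0 \<le> k s n x" for s n x by (simp add: k_def)
  have K0': "k s n x \<le> 1" for s n x
  proof (cases "C s n = {}")
    case False
    then have "0 \<le> D s n x" by (rule Dnn)
    then show ?thesis using False rr_le[of n] by (simp add: k_def)
  qed (simp add: k_def)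
  have K1: "\<bar>k s n y - k s n x\<bar> \<le> d x y" for s n x y
  proof (cases "C s n = {}")
    case True then show ?thesis by (simp add: k_def dnn)
  next
    case False
    have "D s n y \<le> D s n x + d x y" "D s n x \<le> D s n y + d x y"
      using Dlip[OF False, of x y] Dlip[OF False, of y x] dsym[of x y] by auto
    then show ?thesis using False by (simp add: k_def)
  qed
  have K2: "d s x < 1" if "0 < k s n x" for s n x
  proof -
    have ne: "C s n \<noteq> {}" and "D s n x < rr n" using that by (auto simp: k_def split: if_splits)
    then obtain c where c: "c \<in> C s n" "d c x < rr n" using Dless by blast
    have "d s x \<le> d s c + d c x" by (rule dtri)
    then show ?thesis using c rr_pos[of n] by (simp add: C_def)
  qed
  have K3: "k t n x = 0" if "s \<noteq> t" "0 < k s n x" for s t n x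
  proof (rule ccontr)
    assume "k t n x \<noteq> 0"
    then have kt: "0 < k t n x" using K0[of t n x] by linarith
    have "\<exists>c\<in>C s n. d c x < rr n" if "0 < k s n x" for s
    proof -
      have ne: "C s n \<noteq> {}" and "D s n x < rr n" using that by (auto simp: k_def split: if_splits)
      then show ?thesis using Dless by blast
    qed
    then obtain c c' where c: "c \<in> C s n" "d c x < rr n" and c': "c' \<in> C t n" "d c' x < rr n"
      using kt \<open>0 < k s n x\<close> by blast
    have gen: False if "lt a b" "c \<in> C a n" "d c x < rr n" "c' \<in> C b n" "d c' x < rr n" for a b c c'
    proof -
      have "d a c' \<le> d a c + d c c'" by (rule dtri)
      moreover have "d c c' \<le> d c x + d x c'" by (rule dtri)
      moreover have "d x c' = d c' x" by (rule dsym)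
      moreover have "d a c + 3 * rr n \<le> 1" using that(2) by (simp add: C_def)
      moreover have "\<not> d a c' < 1" using that(1,4) by (simp add: C_def)
      ultimately show False using that(3,5) rr_pos[of n] by linarith
    qed
    show False using tot[OF that(1)]
    proof
      assume "lt s t" then show False by (rule gen[OF _ c c'])
    next
      assume "lt t s" then show False by (rule gen[OF _ c' c])
    qed
  qed
  have K4: "\<exists>s n. 0 < k s n x" for x
  proof -
    obtain s where s: "d s x < 1" "\<forall>t. lt t s \<longrightarrow> \<not> d t x < 1"
      using minex[of x "{s. d s x < 1}"] d0[of x] by auto
    have "0 < (1 - d s x) * (4/3)" using s(1) by simp
    then obtain n where n: "(1/2::real)^n < (1 - d s x) * (4/3)"
      using real_arch_pow_inv[of "(1 - d s x) * (4/3)" "1/2"] by auto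
    have xC: "x \<in> C s n" using n s by (simp add: C_def rr_def)
    then have ne: "C s n \<noteq> {}" by auto
    have "D s n x \<le> 0" using Dlow[OF xC, of x] d0 by simp
    then have "0 < k s n x" using ne rr_pos[of n] by (simp add: k_def)
    then show ?thesis by blast
  qed
  define u where "u s x = (\<Sum>n. (1/2::real)^n * k s n x)" for s x
  have geo: "summable (\<lambda>n. (1/2::real)^n)" by (rule summable_geometric) simp
  have geo2: "(\<Sum>n. (1/2::real)^n) = 2" by (subst suminf_geometric) simp_all
  have sk: "summable (\<lambda>n. (1/2::real)^n * k s n x)" for s x
    by (rule summable_comparison_test'[OF geo]) (use K0 K0' in \<open>auto intro!: mult_left_le\<close>)
  have skd: "summable (\<lambda>n. \<bar>(1/2::real)^n * (k s n y - k s n x)\<bar>)" for s x y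
  proof (rule summable_comparison_test'[OF geo])
    fix n :: nat
    have "\<bar>k s n y - k s n x\<bar> \<le> 1" using K0[of s n x] K0'[of s n x] K0[of s n y] K0'[of s n y] by linarith
    then show "norm \<bar>(1/2::real)^n * (k s n y - k s n x)\<bar> \<le> (1/2)^n"
      by (simp add: abs_mult mult_left_le)
  qed
  have u_nn: "0 \<le> u s x" for s x unfolding u_def by (rule suminf_nonneg[OF sk]) (simp add: K0)
  have u_fin: "(\<Sum>s\<in>F. u s x) \<le> 2" if "finite F" for F x
  proof -
    have "(\<Sum>s\<in>F. u s x) = (\<Sum>n. \<Sum>s\<in>F. (1/2::real)^n * k s n x)"
      unfolding u_def by (rule suminf_sum[symmetric]) (rule sk)
    also have "\<dots> \<le> (\<Sum>n. (1/2::real)^n)"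
    proof (rule suminf_le)
      fix n
      have "(\<Sum>s\<in>F. k s n x) \<le> 1"
        by (rule sum_le_one_disj[OF that]) (auto intro: K0 K0' K3)
      then show "(\<Sum>s\<in>F. (1/2::real)^n * k s n x) \<le> (1/2)^n"
        by (simp add: sum_distrib_left[symmetric] mult_left_le)
    qed (auto intro: summable_sum sk geo)
    finally show ?thesis using geo2 by simp
  qed
  have u_lip: "(\<Sum>s\<in>F. \<bar>u s y - u s x\<bar>) \<le> 4 * d x y" if "finite F" for F x y
  proof -
    have "(\<Sum>s\<in>F. \<bar>u s y - u s x\<bar>) \<le> (\<Sum>s\<in>F. \<Sum>n. \<bar>(1/2::real)^n * (k s n y - k s n x)\<bar>)"
    proof (rule sum_mono)
      fix s
      have "u s y - u s x = (\<Sum>n. (1/2::real)^n * k s n y - (1/2)^n * k s n x)"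
        unfolding u_def by (rule suminf_diff[OF sk sk])
      also have "\<dots> = (\<Sum>n. (1/2::real)^n * (k s n y - k s n x))" by (simp add: right_diff_distrib)
      finally show "\<bar>u s y - u s x\<bar> \<le> (\<Sum>n. \<bar>(1/2::real)^n * (k s n y - k s n x)\<bar>)"
        using summable_rabs[OF skd] by simp
    qed
    also have "\<dots> = (\<Sum>n. \<Sum>s\<in>F. \<bar>(1/2::real)^n * (k s n y - k s n x)\<bar>)"
      by (rule suminf_sum[symmetric]) (rule skd)
    also have "\<dots> \<le> (\<Sum>n. (1/2::real)^n * (2 * d x y))"
    proof (rule suminf_le)
      fix n
      have "(\<Sum>s\<in>F. \<bar>k s n y - k s n x\<bar>) \<le> 2 * d x y"
        by (rule sum_abs_diff_disj[OF that]) (auto intro: K0 K1 K3)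
      then show "(\<Sum>s\<in>F. \<bar>(1/2::real)^n * (k s n y - k s n x)\<bar>) \<le> (1/2)^n * (2 * d x y)"
        by (simp add: abs_mult sum_distrib_left[symmetric] mult_left_mono)
    qed (auto intro: summable_sum skd summable_mult2 geo)
    also have "\<dots> = 4 * d x y" using suminf_mult2[OF geo, of "2 * d x y"] geo2 by simp
    finally show ?thesis .
  qed
  define H where "H x = infsum (\<lambda>s. u s x) UNIV" for x
  have u_sum: "(\<lambda>s. u s x) summable_on UNIV" for x
    by (rule nonneg_bdd_above_summable_on) (auto intro!: bdd_aboveI2[where M=2] u_fin u_nn)
  have u_le_H: "(\<Sum>s\<in>F. u s x) \<le> H x" if "finite F" for F x
    unfolding H_def by (rule finite_sum_le_infsum[OF u_sum that]) (auto intro: u_nn)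
  have H_pos: "0 < H x" for x
  proof -
    obtain s n where sn: "0 < k s n x" using K4 by blast
    have "0 < u s x" unfolding u_def
      by (rule suminf_pos2[OF sk, of _ _ n]) (use sn K0 in auto)
    also have "u s x \<le> H x" using u_le_H[of "{s}" x] by simp
    finally show ?thesis .
  qed
  have H_lip: "H y \<le> H x + 4 * d x y" for x y
    unfolding H_def[of y]
  proof (rule infsum_le_finite_sums[OF u_sum])
    fix F :: "'a set" assume F: "finite F"
    have "(\<Sum>s\<in>F. u s y) \<le> (\<Sum>s\<in>F. u s x + \<bar>u s y - u s x\<bar>)" by (rule sum_mono) linarith
    also have "\<dots> = (\<Sum>s\<in>F. u s x) + (\<Sum>s\<in>F. \<bar>u s y - u s x\<bar>)" by (rule sum.distrib)
    also have "\<dots> \<le> H x + 4 * d x y" using u_le_H[OF F, of x] u_lip[OF F, of y x] by linarith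
    finally show "(\<Sum>s\<in>F. u s y) \<le> H x + 4 * d x y" .
  qed
  have H_abs: "\<bar>H x - H y\<bar> \<le> 4 * d x y" for x y
    using H_lip[of x y] H_lip[of y x] dsym[of x y] by linarith
  define f where "f s x = u s x / H x" for s x
  show ?thesis
  proof (rule that)
    show "0 \<le> f s x" for s x using u_nn[of s x] H_pos[of x] by (simp add: f_def)
    show "f s x \<le> 1" for s x using u_le_H[of "{s}" x] H_pos[of x] by (simp add: f_def)
    show "((\<lambda>s. f s x) has_sum 1) UNIV" for x
    proof -
      have "((\<lambda>s. u s x) has_sum H x) UNIV" unfolding H_def by (rule has_sum_infsum[OF u_sum])
      from has_sum_cmult_right[OF this, of "inverse (H x)"]
      show ?thesis using H_pos[of x] by (simp add: f_def field_simps)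
    qed
    show "d s x < 1" if "0 < f s x" for s x
    proof -
      have "0 < u s x" using that H_pos[of x] by (simp add: f_def zero_less_divide_iff)
      have "\<exists>n. 0 < k s n x"
      proof (rule ccontr)
        assume "\<not> (\<exists>n. 0 < k s n x)"
        then have nk: "\<not> 0 < k s n x" for n by blast
        have "k s n x = 0" for n using K0[of s n x] nk[of n] by linarith
        then have "u s x = 0" by (simp add: u_def)
        then show False using \<open>0 < u s x\<close> by simp
      qed
      then show ?thesis using K2 by blast
    qed
    have fin_bd: "(\<Sum>s\<in>F. \<bar>f s y - f s x\<bar>) \<le> 8 * d x y / H y" if "finite F" for F x y
    proof -
      have Hx: "0 < H x" and Hy: "0 < H y" by (rule H_pos)+
      have "(\<Sum>s\<in>F. \<bar>f s y - f s x\<bar>) \<le> (\<Sum>s\<in>F. \<bar>u s y - u s x\<bar> / H y + u s x * (\<bar>H x - H y\<bar> / (H x * H y)))"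
      proof (rule sum_mono)
        fix s
        have "f s y - f s x = (u s y - u s x) / H y + u s x * ((H x - H y) / (H x * H y))"
          using Hx Hy by (simp add: f_def field_simps)
        then have "\<bar>f s y - f s x\<bar> \<le> \<bar>(u s y - u s x) / H y\<bar> + \<bar>u s x * ((H x - H y) / (H x * H y))\<bar>"
          by (metis abs_triangle_ineq)
        also have "\<dots> = \<bar>u s y - u s x\<bar> / H y + u s x * (\<bar>H x - H y\<bar> / (H x * H y))"
          using Hx Hy u_nn[of s x] by (simp add: abs_mult)
        finally show "\<bar>f s y - f s x\<bar> \<le> \<bar>u s y - u s x\<bar> / H y + u s x * (\<bar>H x - H y\<bar> / (H x * H y))" .
      qed
      also have "\<dots> = (\<Sum>s\<in>F. \<bar>u s y - u s x\<bar>) / H y + (\<Sum>s\<in>F. u s x) * (\<bar>H x - H y\<bar> / (H x * H y))"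
        by (simp add: sum.distrib sum_divide_distrib sum_distrib_right)
      also have "\<dots> \<le> 4 * d x y / H y + H x * (4 * d x y / (H x * H y))"
      proof (rule add_mono)
        show "(\<Sum>s\<in>F. \<bar>u s y - u s x\<bar>) / H y \<le> 4 * d x y / H y"
          using u_lip[OF that, of y x] Hy by (simp add: divide_right_mono)
        show "(\<Sum>s\<in>F. u s x) * (\<bar>H x - H y\<bar> / (H x * H y)) \<le> H x * (4 * d x y / (H x * H y))"
          using u_le_H[OF that, of x] H_abs[of x y] Hx Hy
          by (intro mult_mono divide_right_mono) (auto intro: sum_nonneg u_nn)
      qed
      also have "\<dots> = 8 * d x y / H y" using Hx by (simp add: field_simps)
      finally show ?thesis .
    qed
    show "\<exists>\<delta>>0. \<forall>y. d x y < \<delta> \<longrightarrow> infsum (\<lambda>s. \<bar>f s y - f s x\<bar>) UNIV < e" if "0 < e" for x e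
    proof (intro exI[of _ "min (H x / 8) (e * H x / 16)"] conjI allI impI)
      have Hx: "0 < H x" by (rule H_pos)
      show "0 < min (H x / 8) (e * H x / 16)" using Hx that by simp
      fix y assume dy: "d x y < min (H x / 8) (e * H x / 16)"
      have Hy: "0 < H y" by (rule H_pos)
      have "H x \<le> 2 * H y" using H_abs[of x y] dy by linarith
      have sm: "(\<lambda>s. \<bar>f s y - f s x\<bar>) summable_on UNIV"
        by (rule nonneg_bdd_above_summable_on) (auto intro!: bdd_aboveI2[where M="8 * d x y / H y"] fin_bd)
      have "infsum (\<lambda>s. \<bar>f s y - f s x\<bar>) UNIV \<le> 8 * d x y / H y"
        by (rule infsum_le_finite_sums[OF sm]) (rule fin_bd)
      also have "\<dots> \<le> 16 * d x y / H x"
      proof -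
        have "H x * d x y \<le> H y * (2 * d x y)"
          using mult_right_mono[OF \<open>H x \<le> 2 * H y\<close> dnn[of x y]] by (simp add: algebra_simps)
        then show ?thesis using Hx Hy by (simp add: field_simps)
      qed
      also have "\<dots> < e" using dy Hx by (simp add: field_simps)
      finally show "infsum (\<lambda>s. \<bar>f s y - f s x\<bar>) UNIV < e" .
    qed
  qed
qed



lemma add_nbhd:
  fixes N :: "'a::topological_group_add set"
  assumes "open N" "0 \<in> N"
  shows "\<exists>A. open A \<and> 0 \<in> A \<and> (\<forall>a\<in>A. \<forall>b\<in>A. a + b \<in> N)"
proof -
  have "((\<lambda>p. fst p + snd p) \<longlongrightarrow> (0::'a) + 0) (nhds 0 \<times>\<^sub>F nhds 0)"
    by (intro tendsto_add filterlim_fst filterlim_snd)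
  then have "eventually (\<lambda>p. fst p + snd p \<in> N) (nhds (0::'a) \<times>\<^sub>F nhds 0)"
    using assms by (intro topological_tendstoD) auto
  then obtain Q where Q: "eventually Q (nhds (0::'a))" "\<forall>x y. Q x \<longrightarrow> Q y \<longrightarrow> x + y \<in> N"
    unfolding eventually_prod_same by auto
  from Q(1) have "\<exists>A. open A \<and> 0 \<in> A \<and> (\<forall>x\<in>A. Q x)" by (simp add: eventually_nhds)
  then obtain A where "open A" "0 \<in> A" "\<forall>x\<in>A. Q x" by auto
  then show ?thesis using Q(2) by (intro exI[of _ A]) auto
qed

lemma shrink_exists:
  fixes N :: "'a::topological_group_add set"
  assumes "open N" "0 \<in> N"
  shows "\<exists>M. open M \<and> 0 \<in> M \<and> (\<forall>x\<in>M. -x \<in> M) \<and> M \<subseteq> N \<and> (\<forall>a\<in>M. \<forall>b\<in>M. \<forall>c\<in>M. a + b + c \<in> N)"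
proof -
  obtain A where A: "open A" "0 \<in> A" "\<forall>a\<in>A. \<forall>b\<in>A. a + b \<in> N" using add_nbhd[OF assms] by blast
  obtain B where B: "open B" "0 \<in> B" "\<forall>a\<in>B. \<forall>b\<in>B. a + b \<in> A" using add_nbhd[OF A(1,2)] by blast
  define B0 where "B0 = B \<inter> A"
  define M where "M = B0 \<inter> uminus -` B0"
  have oB0: "open B0" using A B by (simp add: B0_def open_Int)
  have "continuous_on UNIV (\<lambda>x::'a. - x)" by (intro continuous_intros)
  then have "open (uminus -` B0)" using continuous_on_open_vimage[of UNIV "\<lambda>x::'a. - x"] oB0 by auto
  then have "open M" using oB0 by (simp add: M_def open_Int)
  moreover have "0 \<in> M" using A B by (simp add: M_def B0_def)
  moreover have "\<forall>x\<in>M. -x \<in> M" by (simp add: M_def)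
  moreover have "M \<subseteq> N"
  proof
    fix x assume "x \<in> M"
    then have "x \<in> A" by (simp add: M_def B0_def)
    then show "x \<in> N" using A(2,3) by (metis add.right_neutral)
  qed
  moreover have "\<forall>a\<in>M. \<forall>b\<in>M. \<forall>c\<in>M. a + b + c \<in> N"
    using A(3) B(3) by (simp add: M_def B0_def)
  ultimately show ?thesis by (intro exI[of _ M]) simp
qed

definition shrink :: "'a::topological_group_add set \<Rightarrow> 'a set" where
  "shrink N = (SOME M. open M \<and> 0 \<in> M \<and> (\<forall>x\<in>M. -x \<in> M) \<and> M \<subseteq> N \<and> (\<forall>a\<in>M. \<forall>b\<in>M. \<forall>c\<in>M. a + b + c \<in> N))"

lemma shrink_props:
  fixes N :: "'a::topological_group_add set"
  assumes "open N" "0 \<in> N"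
  shows "open (shrink N)" "0 \<in> shrink N" "\<And>x. x \<in> shrink N \<Longrightarrow> -x \<in> shrink N" "shrink N \<subseteq> N"
    "\<And>a b c. a \<in> shrink N \<Longrightarrow> b \<in> shrink N \<Longrightarrow> c \<in> shrink N \<Longrightarrow> a + b + c \<in> N"
proof -
  have P: "open (shrink N) \<and> 0 \<in> shrink N \<and> (\<forall>x\<in>shrink N. -x \<in> shrink N) \<and> shrink N \<subseteq> N \<and> (\<forall>a\<in>shrink N. \<forall>b\<in>shrink N. \<forall>c\<in>shrink N. a + b + c \<in> N)"
    unfolding shrink_def by (rule someI_ex, rule shrink_exists[OF assms])
  show "open (shrink N)" "0 \<in> shrink N" "shrink N \<subseteq> N" using P by simp_all
  show "\<And>x. x \<in> shrink N \<Longrightarrow> -x \<in> shrink N" using P by simp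
  show "\<And>a b c. a \<in> shrink N \<Longrightarrow> b \<in> shrink N \<Longrightarrow> c \<in> shrink N \<Longrightarrow> a + b + c \<in> N" using P by simp
qed

primrec Vs :: "'a::topological_group_add set \<Rightarrow> nat \<Rightarrow> 'a set" where
  "Vs W 0 = shrink W"
| "Vs W (Suc n) = shrink (Vs W n)"

lemma Vs_basic:
  fixes W :: "'a::topological_group_add set"
  assumes "open W" "0 \<in> W"
  shows "open (Vs W n) \<and> 0 \<in> Vs W n"
proof (induction n)
  case 0 then show ?case using shrink_props[OF assms] by simp
next
  case (Suc n) then show ?case using shrink_props[of "Vs W n"] by simp
qed

lemma Vs_props:
  fixes W :: "'a::topological_group_add set"
  assumes "open W" "0 \<in> W"
  shows "open (Vs W n)" "0 \<in> Vs W n" "\<And>x. x \<in> Vs W n \<Longrightarrow> -x \<in> Vs W n"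
    "Vs W (Suc n) \<subseteq> Vs W n" "Vs W 0 \<subseteq> W"
    "\<And>a b c. a \<in> Vs W (Suc n) \<Longrightarrow> b \<in> Vs W (Suc n) \<Longrightarrow> c \<in> Vs W (Suc n) \<Longrightarrow> a + b + c \<in> Vs W n"
proof -
  have b: "open (Vs W n)" "0 \<in> Vs W n" for n using Vs_basic[OF assms] by auto
  show "open (Vs W n)" "0 \<in> Vs W n" by (rule b)+
  show "Vs W (Suc n) \<subseteq> Vs W n" using shrink_props(4)[OF b] by simp
  show "Vs W 0 \<subseteq> W" using shrink_props(4)[OF assms] by simp
  show "a + b + c \<in> Vs W n" if "a \<in> Vs W (Suc n)" "b \<in> Vs W (Suc n)" "c \<in> Vs W (Suc n)" for a b c
    using that by (simp add: shrink_props(5)[OF b(1)[of n] b(2)[of n]])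
  show "-x \<in> Vs W n" if x: "x \<in> Vs W n" for x
  proof (cases n)
    case 0 then show ?thesis using shrink_props(3)[OF assms] x by simp
  next
    case (Suc m)
    have "x \<in> shrink (Vs W m)" using x Suc by simp
    then have "-x \<in> shrink (Vs W m)" by (rule shrink_props(3)[OF b(1)[of m] b(2)[of m]])
    then show ?thesis using Suc by simp
  qed
qed



definition wt :: "(nat \<times> 'a) list \<Rightarrow> real" where
  "wt ys = sum_list (map (\<lambda>p. (1/2::real)^(fst p)) ys)"
definition sm :: "(nat \<times> 'a::monoid_add) list \<Rightarrow> 'a" where
  "sm ys = sum_list (map snd ys)"

lemma wt_simps[simp]: "wt [] = 0" "wt (a # xs) = (1/2)^(fst a) + wt xs" "wt (xs @ zs) = wt xs + wt zs"
  by (simp_all add: wt_def)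
lemma sm_simps[simp]: "sm [] = 0" "sm (a # xs) = snd a + sm xs" "sm (xs @ zs) = sm xs + sm zs"
  by (simp_all add: sm_def)
lemma wt_nn: "0 \<le> wt ys" by (induction ys) auto

lemma chain_lemma:
  fixes V :: "nat \<Rightarrow> 'a::group_add set"
  assumes mono: "\<And>n. V (Suc n) \<subseteq> V n" and zero: "\<And>n. 0 \<in> V n"
    and tri: "\<And>n a b c. a \<in> V (Suc n) \<Longrightarrow> b \<in> V (Suc n) \<Longrightarrow> c \<in> V (Suc n) \<Longrightarrow> a + b + c \<in> V n"
  shows "(\<forall>p\<in>set ys. snd p \<in> V (fst p)) \<Longrightarrow> wt ys < (1/2)^m \<Longrightarrow> sm ys \<in> V m"
proof (induction "length ys" arbitrary: ys m rule: less_induct)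
  case less
  show ?case
  proof (cases "ys = []")
    case True then show ?thesis using zero by simp
  next
    case False
    define L where "L = length ys"
    define T where "T = wt ys"
    define P where "P k = wt (take k ys)" for k
    have Tpos: "0 < T"
    proof -
      obtain a rest where "ys = a # rest" using False by (cases ys) auto
      then show ?thesis using wt_nn[of rest] by (simp add: T_def add_pos_nonneg)
    qed
    define J where "J = {k. k \<le> L \<and> P k \<le> T/2}"
    define j where "j = Max J"
    have finJ: "finite J" unfolding J_def by (rule finite_subset[of _ "{..L}"]) auto
    have "0 \<in> J" using Tpos by (simp add: J_def P_def)
    then have jJ: "j \<in> J" unfolding j_def using finJ by (intro Max_in) auto
    have "P L = T" by (simp add: P_def L_def T_def)
    then have jL: "j < L" using jJ Tpos by (auto simp: J_def le_less)
    have "Suc j \<notin> J"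
    proof
      assume "Suc j \<in> J"
      then have "Suc j \<le> j" unfolding j_def using finJ by (rule Max_ge[rotated])
      then show False by simp
    qed
    then have PSj: "T/2 < P (Suc j)" using jL by (auto simp: J_def)
    have Pj: "P j \<le> T/2" using jJ by (simp add: J_def)
    obtain n y where nth: "ys ! j = (n, y)" by (cases "ys ! j") auto
    define as where "as = take j ys"
    define cs where "cs = drop (Suc j) ys"
    have dec: "ys = as @ (n, y) # cs"
      unfolding as_def cs_def using id_take_nth_drop[of j ys] jL nth by (simp add: L_def)
    have Psj: "P (Suc j) = P j + (1/2)^n"
      unfolding P_def using take_Suc_conv_app_nth[of j ys] jL nth by (simp add: L_def)
    have Tdec: "T = P j + (1/2)^n + wt cs"
      unfolding T_def P_def as_def[symmetric] by (subst dec) simp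
    have mem: "\<forall>p\<in>set ys. snd p \<in> V (fst p)" by (rule less.prems(1))
    have Tm: "T < (1/2)^m" using less.prems(2) by (simp add: T_def)
    have half: "(1/2::real)^(Suc m) = (1/2)^m / 2" by simp
    have a_in: "sm as \<in> V (Suc m)"
    proof (rule less.hyps)
      show "length as < length ys" using jL by (simp add: as_def L_def)
      show "\<forall>p\<in>set as. snd p \<in> V (fst p)" using mem dec by auto
      show "wt as < (1/2)^(Suc m)" using Pj Tm half by (simp add: P_def as_def)
    qed
    have c_in: "sm cs \<in> V (Suc m)"
    proof (rule less.hyps)
      show "length cs < length ys" using jL by (simp add: cs_def L_def)
      show "\<forall>p\<in>set cs. snd p \<in> V (fst p)" using mem dec by auto
      show "wt cs < (1/2)^(Suc m)" using PSj Psj Tdec Tm half by simp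
    qed
    have yn: "y \<in> V n" using mem dec by auto
    have "(1/2::real)^n \<le> T" using Tdec wt_nn[of cs] Pj
    proof -
      have "0 \<le> P j" by (simp add: P_def wt_nn)
      then show ?thesis using Tdec wt_nn[of cs] by linarith
    qed
    then have "(1/2::real)^n < (1/2)^m" using Tm by linarith
    then have "m < n" by (simp add: power_strict_decreasing_iff)
    then have "V n \<subseteq> V (Suc m)" using lift_Suc_antimono_le[of V, OF mono] by simp
    then have y_in: "y \<in> V (Suc m)" using yn by auto
    have "sm ys = sm as + y + sm cs" by (subst dec) (simp add: add.assoc)
    then show ?thesis using tri[OF a_in y_in c_in] by simp
  qed
qed

definition reps :: "(nat \<Rightarrow> 'a::monoid_add set) \<Rightarrow> 'a \<Rightarrow> real set" where
  "reps V x = {wt ys | ys. (\<forall>p\<in>set ys. snd p \<in> V (fst p)) \<and> sm ys = x}"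
definition pn :: "(nat \<Rightarrow> 'a::monoid_add set) \<Rightarrow> 'a \<Rightarrow> real" where
  "pn V x = Inf (insert 1 (reps V x))"

lemma reps_nn: "a \<in> reps V x \<Longrightarrow> 0 \<le> a"
  by (auto simp: reps_def wt_nn)

lemma pn_bdd: "bdd_below (insert 1 (reps V x))"
  by (rule bdd_belowI[of _ 0]) (auto dest: reps_nn)

lemma pn_nn: "0 \<le> pn V x"
  unfolding pn_def by (rule cInf_greatest) (auto dest: reps_nn)

lemma pn_le1: "pn V x \<le> 1"
  unfolding pn_def by (rule cInf_lower[OF _ pn_bdd]) simp

lemma pn_le_rep: "a \<in> reps V x \<Longrightarrow> pn V x \<le> a"
  unfolding pn_def by (rule cInf_lower[OF _ pn_bdd]) simp

lemma pn_0: "pn V 0 = 0"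
proof -
  have "0 \<in> reps V 0" unfolding reps_def by (rule CollectI, rule exI[of _ "[]"]) simp
  then show ?thesis using pn_le_rep[of 0 V 0] pn_nn[of V 0] by simp
qed

lemma pn_V: "x \<in> V n \<Longrightarrow> pn V x \<le> (1/2)^n"
proof -
  assume "x \<in> V n"
  then have "(1/2)^n \<in> reps V x" unfolding reps_def by (intro CollectI exI[of _ "[(n,x)]"]) simp
  then show ?thesis by (rule pn_le_rep)
qed

lemma pn_small:
  fixes V :: "nat \<Rightarrow> 'a::group_add set"
  assumes mono: "\<And>n. V (Suc n) \<subseteq> V n" and zero: "\<And>n. 0 \<in> V n"
    and tri: "\<And>n a b c. a \<in> V (Suc n) \<Longrightarrow> b \<in> V (Suc n) \<Longrightarrow> c \<in> V (Suc n) \<Longrightarrow> a + b + c \<in> V n"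
    and lt: "pn V x < 1"
  shows "x \<in> V 0"
proof -
  obtain a where a: "a \<in> insert 1 (reps V x)" "a < 1"
    using lt unfolding pn_def by (subst (asm) cInf_less_iff[OF _ pn_bdd]) auto
  then have "a \<in> reps V x" by auto
  then obtain ys where ys: "a = wt ys" "\<forall>p\<in>set ys. snd p \<in> V (fst p)" "sm ys = x"
    unfolding reps_def by auto
  have "wt ys < (1/2)^0" using a(2) unfolding ys(1) by simp
  then have "sm ys \<in> V 0" using chain_lemma[of V ys 0] mono zero tri ys(2) by blast
  then show ?thesis using ys(3) by simp
qed

lemma sm_neg: "sm (rev (map (\<lambda>p. (fst p, - snd p)) ys)) = - sm (ys :: (nat \<times> 'a::group_add) list)"
  by (induction ys) (auto simp: minus_add)

lemma wt_neg: "wt (rev (map (\<lambda>p. (fst p, - snd p)) ys)) = wt ys"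
  by (induction ys) auto

lemma pn_neg_le:
  fixes V :: "nat \<Rightarrow> 'a::group_add set"
  assumes sym: "\<And>n x. x \<in> V n \<Longrightarrow> -x \<in> V n"
  shows "pn V (- x) \<le> pn V x"
  unfolding pn_def
proof (rule cInf_superset_mono[OF _ pn_bdd])
  show "insert 1 (reps V x) \<noteq> {}" by simp
  show "insert 1 (reps V x) \<subseteq> insert 1 (reps V (- x))"
  proof
    fix a assume "a \<in> insert 1 (reps V x)"
    then show "a \<in> insert 1 (reps V (- x))"
    proof
      assume "a \<in> reps V x"
      then obtain ys where ys: "a = wt ys" "\<forall>p\<in>set ys. snd p \<in> V (fst p)" "sm ys = x"
        unfolding reps_def by auto
      let ?zs = "rev (map (\<lambda>p. (fst p, - snd p)) ys)"
      have "\<forall>p\<in>set ?zs. snd p \<in> V (fst p)" using ys(2) sym by auto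
      moreover have "sm ?zs = - x" using ys(3) sm_neg by metis
      moreover have "wt ?zs = a" using ys(1) wt_neg by metis
      ultimately have "a \<in> reps V (- x)" unfolding reps_def by blast
      then show ?thesis by simp
    qed simp
  qed
qed

lemma pn_neg:
  fixes V :: "nat \<Rightarrow> 'a::group_add set"
  assumes sym: "\<And>n x. x \<in> V n \<Longrightarrow> -x \<in> V n"
  shows "pn V (- x) = pn V x"
proof -
  have 1: "pn V (-x) \<le> pn V x" by (rule pn_neg_le) (rule sym)
  have 2: "pn V (- (- x)) \<le> pn V (-x)" by (rule pn_neg_le) (rule sym)
  show ?thesis using 1 2 by simp
qed

lemma pn_add:
  fixes V :: "nat \<Rightarrow> 'a::group_add set"
  shows "pn V (x + y) \<le> pn V x + pn V y"
proof -
  have key: "pn V (x + y) \<le> a + b" if a: "a \<in> insert 1 (reps V x)" and b: "b \<in> insert 1 (reps V y)" for a b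
  proof -
    have a0: "0 \<le> a" using a by (auto dest: reps_nn)
    have b0: "0 \<le> b" using b by (auto dest: reps_nn)
    show ?thesis
    proof (cases "a = 1 \<or> b = 1")
      case True then show ?thesis using pn_le1[of V "x + y"] a0 b0 by auto
    next
      case False
      then have "a \<in> reps V x" "b \<in> reps V y" using a b by auto
      then obtain ys zs where ys: "a = wt ys" "\<forall>p\<in>set ys. snd p \<in> V (fst p)" "sm ys = x"
        and zs: "b = wt zs" "\<forall>p\<in>set zs. snd p \<in> V (fst p)" "sm zs = y"
        unfolding reps_def by auto
      have "a + b \<in> reps V (x + y)" unfolding reps_def
        by (rule CollectI, rule exI[of _ "ys @ zs"]) (use ys zs in auto)
      then show ?thesis by (rule pn_le_rep)
    qed
  qed
  have "pn V (x + y) - pn V y \<le> pn V x"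
    unfolding pn_def[of V x]
  proof (rule cInf_greatest)
    show "insert 1 (reps V x) \<noteq> {}" by simp
    fix a assume a: "a \<in> insert 1 (reps V x)"
    have "pn V (x + y) - a \<le> pn V y"
      unfolding pn_def[of V y]
    proof (rule cInf_greatest)
      show "insert 1 (reps V y) \<noteq> {}" by simp
      fix b assume "b \<in> insert 1 (reps V y)"
      then show "pn V (x + y) - a \<le> b" using key[OF a] by force
    qed
    then show "pn V (x + y) - pn V y \<le> a" by linarith
  qed
  then show ?thesis by linarith
qed


theorem mainTheorem4:
  fixes U :: "'a::topological_group_add set"
  assumes "open U" and "U \<noteq> {}"
  shows "\<exists>(S::'a set set) f. partition_of_unity S f \<and>
           small_wrt (range (\<lambda>g. (\<lambda>u. g + u) ` U)) S f"
proof -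
  obtain u0 where u0: "u0 \<in> U" using assms(2) by blast
  define W where "W = (\<lambda>w. u0 + w) -` U"
  have "continuous_on UNIV (\<lambda>w::'a. u0 + w)" by (intro continuous_intros)
  then have oW: "open W" using continuous_on_open_vimage[of UNIV "\<lambda>w::'a. u0 + w"] assms(1)
    by (auto simp: W_def)
  have W0: "0 \<in> W" using u0 by (simp add: W_def)
  define Vn where "Vn = Vs W"
  have Vopen: "open (Vn n)" for n using Vs_props(1)[OF oW W0] by (simp add: Vn_def)
  have Vzero: "0 \<in> Vn n" for n using Vs_props(2)[OF oW W0] by (simp add: Vn_def)
  have Vsym: "-x \<in> Vn n" if "x \<in> Vn n" for n x using Vs_props(3)[OF oW W0] that by (simp add: Vn_def)
  have Vmono: "Vn (Suc n) \<subseteq> Vn n" for n using Vs_props(4)[OF oW W0] by (simp add: Vn_def)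
  have VW: "Vn 0 \<subseteq> W" using Vs_props(5)[OF oW W0] by (simp add: Vn_def)
  have Vtri: "a + b + c \<in> Vn n" if "a \<in> Vn (Suc n)" "b \<in> Vn (Suc n)" "c \<in> Vn (Suc n)" for n a b c
    using Vs_props(6)[OF oW W0] that by (simp add: Vn_def)
  define d where "d x y = pn Vn (-x + y)" for x y
  have d0: "d x x = 0" for x by (simp add: d_def pn_0)
  have dsym: "d x y = d y x" for x y
  proof -
    have "-y + x = - (-x + y)" by (simp add: minus_add)
    then show ?thesis unfolding d_def using pn_neg[of Vn "-x + y"] Vsym by metis
  qed
  have dtri: "d x z \<le> d x y + d y z" for x y z
  proof -
    have "-x + z = (-x + y) + (-y + z)" by (simp add: add.assoc)
    then show ?thesis unfolding d_def using pn_add[of Vn "-x + y" "-y + z"] by simp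
  qed
  obtain f :: "'a \<Rightarrow> 'a \<Rightarrow> real" where
    f1: "\<And>s x. 0 \<le> f s x" and f2: "\<And>s x. f s x \<le> 1"
    and f3: "\<And>x. ((\<lambda>s. f s x) has_sum 1) UNIV"
    and f4: "\<And>s x. 0 < f s x \<Longrightarrow> d s x < 1"
    and f5: "\<And>x e. 0 < e \<Longrightarrow> \<exists>\<delta>>0. \<forall>y. d x y < \<delta> \<longrightarrow> infsum (\<lambda>s. \<bar>f s y - f s x\<bar>) UNIV < e"
    apply (rule pou_pseudometric[of d, OF d0 dsym dtri])
    subgoal premises prems for f by (rule prems(1)[OF prems(2) prems(3) prems(4) prems(5) prems(6)])
    done
  define S where "S = range (\<lambda>s::'a. {s})"
  define F where "F A x = f (the_elem A) x" for A x
  have inj: "inj_on (\<lambda>s::'a. {s}) UNIV" by (simp add: inj_on_def)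
  have ev: "eventually (\<lambda>y. d x y < \<delta>) (nhds x)" if dpos: "0 < \<delta>" for x \<delta>
  proof -
    obtain n where n: "(1/2::real)^n < \<delta>" using real_arch_pow_inv[of \<delta> "1/2"] dpos by auto
    have "((\<lambda>y. -x + y) \<longlongrightarrow> -x + x) (nhds x)"
      by (intro tendsto_add tendsto_const filterlim_ident)
    then have "eventually (\<lambda>y. -x + y \<in> Vn n) (nhds x)"
      using Vopen[of n] Vzero[of n] by (intro topological_tendstoD) auto
    then show ?thesis
    proof (rule eventually_mono)
      fix y assume "-x + y \<in> Vn n"
      then have "pn Vn (-x + y) \<le> (1/2)^n" by (rule pn_V)
      then show "d x y < \<delta>" using n by (simp add: d_def)
    qed
  qed
  show ?thesis
  proof (intro exI[of _ S] exI[of _ F] conjI)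
    show "partition_of_unity S F"
      unfolding partition_of_unity_def
    proof (intro conjI allI impI ballI)
      show "S \<noteq> {}" by (simp add: S_def)
      fix x
      show "0 \<le> F s x" "F s x \<le> 1" if "s \<in> S" for s using f1 f2 by (simp_all add: F_def)
      have "((\<lambda>s. F s x) has_sum 1) ((\<lambda>s. {s}) ` UNIV)"
        by (subst has_sum_reindex[OF inj]) (simp add: o_def F_def f3)
      then show "((\<lambda>s. F s x) has_sum 1) S" by (simp add: S_def)
      fix e :: real assume e: "0 < e"
      obtain \<delta> where \<delta>: "0 < \<delta>" "\<forall>y. d x y < \<delta> \<longrightarrow> infsum (\<lambda>s. \<bar>f s y - f s x\<bar>) UNIV < e"
        using f5[OF e, of x] by blast
      have eq: "infsum (\<lambda>s. \<bar>F s y - F s x\<bar>) S = infsum (\<lambda>s. \<bar>f s y - f s x\<bar>) UNIV" for y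
        unfolding S_def by (subst infsum_reindex[OF inj]) (simp add: o_def F_def)
      show "\<forall>\<^sub>F y in nhds x. infsum (\<lambda>s. \<bar>F s y - F s x\<bar>) S < e"
        using ev[OF \<delta>(1), of x] by (rule eventually_mono) (use \<delta>(2) eq in auto)
    qed
    show "small_wrt (range (\<lambda>g. (\<lambda>u. g + u) ` U)) S F"
      unfolding small_wrt_def
    proof
      fix A assume "A \<in> S"
      then obtain s where s: "A = {s}" by (auto simp: S_def)
      show "\<exists>V\<in>range (\<lambda>g. (\<lambda>u. g + u) ` U). {x. 0 < F A x \<and> F A x \<le> 1} \<subseteq> V"
      proof (intro bexI[of _ "(\<lambda>u. (s + - u0) + u) ` U"] subsetI)
        show "(\<lambda>u. (s + - u0) + u) ` U \<in> range (\<lambda>g. (\<lambda>u. g + u) ` U)" by blast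
        fix x assume "x \<in> {x. 0 < F A x \<and> F A x \<le> 1}"
        then have "0 < f s x" by (simp add: F_def s)
        then have "pn Vn (-s + x) < 1" using f4 by (simp add: d_def)
        then have "-s + x \<in> Vn 0" using pn_small[of Vn "-s + x"] Vmono Vzero Vtri by blast
        then have "u0 + (-s + x) \<in> U" using VW by (auto simp: W_def)
        moreover have "x = (s + - u0) + (u0 + (-s + x))"
        proof -
          have "(s + - u0) + (u0 + (-s + x)) = s + ((- u0 + u0) + (-s + x))" by (simp only: add.assoc)
          also have "\<dots> = x" by simp
          finally show ?thesis by simp
        qed
        ultimately show "x \<in> (\<lambda>u. (s + - u0) + u) ` U" by (rule rev_image_eqI)
      qed
    qed
  qed
qed

end
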